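(* Let $j,k$ be natural numbers with $0<j<k$ and let $a_0,a_1,a_2,b_0,b_1,b_2$ be real numbers with $a_1+a_2=0$ and $b_1+b_2=0$ (equivalently $A(0)=A(1)$ and $B(0)=B(1)$ for $A(t)=a_0+a_1t^j+a_2t^k$, $B(t)=b_0+b_1t^j+b_2t^k$). Consider the Abel equation $$\frac{dx}{dt}=(a_0+a_1t^j+a_2t^k)x^3+(b_0+b_1t^j+b_2t^k)x^2,\qquad t\in[0,1],$$ and assume it does not have a center at $x=0$. Then it has at most one non-zero periodic orbit, and when this periodic orbit exists it is hyperbolic.
   Context: A periodic orbit is a solution $x(t)$ defined on all of $[0,1]$ with $x(0)=x(1)$; $x\equiv0$ is always one, and non-zero periodic orbits are the others. The Poincaré map is $\Pi(x_0)=x(1;x_0)$ where $x(t;x_0)$ is the solution with $x(0;x_0)=x_0$; a periodic orbit with initial condition $x_0$ is hyperbolic if $\Pi'(x_0)\ne1$. The equation has a center at $x=0$ if there is a neighborhood of $0$ such that every solution starting at $t=0$ in this neighborhood is a periodic orbit. *)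

theory Defs
  imports "HOL-Analysis.Analysis"
begin

definition is_solution :: "(real \<Rightarrow> real \<Rightarrow> real) \<Rightarrow> (real \<Rightarrow> real) \<Rightarrow> bool" where
  "is_solution f x \<longleftrightarrow>
     (\<forall>t\<in>{0..1}. (x has_real_derivative f t (x t)) (at t within {0..1}))"

definition poincare_domain :: "(real \<Rightarrow> real \<Rightarrow> real) \<Rightarrow> real set" where
  "poincare_domain f = {x0. \<exists>x. is_solution f x \<and> x 0 = x0}"

text \<open>Poincare map: x0 maps to x(1;x0) (solutions are unique for the smooth fields considered).\<close>
definition poincare :: "(real \<Rightarrow> real \<Rightarrow> real) \<Rightarrow> real \<Rightarrow> real" where
  "poincare f x0 = (THE y. \<exists>x. is_solution f x \<and> x 0 = x0 \<and> x 1 = y)"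

definition periodic_orbit :: "(real \<Rightarrow> real \<Rightarrow> real) \<Rightarrow> real \<Rightarrow> bool" where
  "periodic_orbit f x0 \<longleftrightarrow> (\<exists>x. is_solution f x \<and> x 0 = x0 \<and> x 1 = x0)"

definition hyperbolic_orbit :: "(real \<Rightarrow> real \<Rightarrow> real) \<Rightarrow> real \<Rightarrow> bool" where
  "hyperbolic_orbit f x0 \<longleftrightarrow>
     (\<exists>d. (poincare f has_real_derivative d) (at x0 within poincare_domain f) \<and> d \<noteq> 1)"

definition has_center :: "(real \<Rightarrow> real \<Rightarrow> real) \<Rightarrow> bool" where
  "has_center f \<longleftrightarrow> (\<exists>e>0. \<forall>x0. \<bar>x0\<bar> < e \<longrightarrow> periodic_orbit f x0)"

definition abel_field :: "(real \<Rightarrow> real) \<Rightarrow> (real \<Rightarrow> real) \<Rightarrow> real \<Rightarrow> real \<Rightarrow> real" where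
  "abel_field A B t x = A t * x ^ 3 + B t * x ^ 2"

end

theory Submission
  imports Defs
begin

lemma sol_cont:
  assumes "is_solution f x" shows "continuous_on {0..1} x"
  using assms unfolding is_solution_def
  by (meson DERIV_continuous continuous_on_eq_continuous_within)

lemma cont_bound:
  fixes h :: "real \<Rightarrow> real"
  assumes "continuous_on {0..1} h" shows "\<exists>M. \<forall>t\<in>{0..1}. \<bar>h t\<bar> \<le> M"
proof -
  have "compact (h ` {0..1})" by (rule compact_continuous_image[OF assms compact_Icc])
  then have "bounded (h ` {0..1})" by (rule compact_imp_bounded)
  then obtain M where "\<forall>y\<in>h ` {0..1}. norm y \<le> M" unfolding bounded_iff by blast
  thus ?thesis by auto
qed
lemma lin_formula:
  fixes w k :: "real \<Rightarrow> real"
  assumes der: "\<And>t. t \<in> {0..1} \<Longrightarrow> (w has_real_derivative k t * w t) (at t within {0..1})"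
    and kc: "continuous_on {0..1} k"
  shows "\<forall>t\<in>{0..1}. w t = w 0 * exp (integral {0..t} k)"
proof -
  define K where "K t = integral {0..t} k" for t
  have dK: "\<And>t. t \<in> {0..1} \<Longrightarrow> (K has_real_derivative k t) (at t within {0..1})"
    unfolding K_def by (rule integral_has_real_derivative[OF kc])
  have "\<And>t. t \<in> {0..1} \<Longrightarrow> ((\<lambda>t. w t * exp (- K t)) has_real_derivative 0) (at t within {0..1})"
  proof -
    fix t :: real assume t: "t \<in> {0..1}"
    have "((\<lambda>t. w t * exp (- K t)) has_real_derivative (k t * w t) * exp (- K t) + w t * (exp (- K t) * (- k t))) (at t within {0..1})"
    proof -
      have e: "((\<lambda>t. exp (- K t)) has_real_derivative exp (- K t) * (- k t)) (at t within {0..1})"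
        using DERIV_chain2[OF DERIV_exp DERIV_minus[OF dK[OF t]]] by simp
      show ?thesis using DERIV_mult[OF der[OF t] e] by simp
    qed
    thus "((\<lambda>t. w t * exp (- K t)) has_real_derivative 0) (at t within {0..1})"
      by (simp add: algebra_simps)
  qed
  then obtain c where c: "\<forall>t\<in>{0..1}. w t * exp (- K t) = c"
    using has_field_derivative_zero_constant[of "{0..1::real}" "\<lambda>t. w t * exp (- K t)"] convex_real_interval by blast
  have K0: "K 0 = 0" by (simp add: K_def)
  have "c = w 0" using c[rule_format, of 0] K0 by simp
  show ?thesis
  proof
    fix t :: real assume t: "t \<in> {0..1}"
    have "w t * exp (- K t) = w 0" using c t \<open>c = w 0\<close> by auto
    hence "w t = w 0 * exp (K t)" by (metis exp_minus_inverse mult.assoc mult.right_neutral)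
    thus "w t = w 0 * exp (integral {0..t} k)" by (simp add: K_def)
  qed
qed


definition hdiff :: "(real \<Rightarrow> real) \<Rightarrow> (real \<Rightarrow> real) \<Rightarrow> (real \<Rightarrow> real) \<Rightarrow> (real \<Rightarrow> real) \<Rightarrow> real \<Rightarrow> real" where
  "hdiff A B x y t = A t * ((x t)^2 + x t * y t + (y t)^2) + B t * (x t + y t)"

lemma hdiff_cont:
  assumes "continuous_on {0..1} A" "continuous_on {0..1} B" "continuous_on {0..1} x" "continuous_on {0..1} y"
  shows "continuous_on {0..1} (hdiff A B x y)"
  unfolding hdiff_def by (intro continuous_intros assms)

lemma diff_formula:
  assumes A: "continuous_on {0..1} A" and B: "continuous_on {0..1} B"
    and x: "is_solution (abel_field A B) x" and y: "is_solution (abel_field A B) y"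
  shows "\<forall>t\<in>{0..1}. y t - x t = (y 0 - x 0) * exp (integral {0..t} (hdiff A B x y))"
proof (rule lin_formula[where w="\<lambda>t. y t - x t"])
  show "continuous_on {0..1} (hdiff A B x y)"
    by (intro hdiff_cont A B sol_cont[OF x] sol_cont[OF y])
  fix t :: real assume t: "t \<in> {0..1}"
  have "((\<lambda>t. y t - x t) has_real_derivative abel_field A B t (y t) - abel_field A B t (x t)) (at t within {0..1})"
    using x y t unfolding is_solution_def by (intro DERIV_diff) auto
  moreover have "abel_field A B t (y t) - abel_field A B t (x t) = hdiff A B x y t * (y t - x t)"
    unfolding abel_field_def hdiff_def by (simp add: algebra_simps power2_eq_square power3_eq_cube)
  ultimately show "((\<lambda>t. y t - x t) has_real_derivative hdiff A B x y t * (y t - x t)) (at t within {0..1})"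
    by simp
qed

lemma sol_unique:
  assumes "continuous_on {0..1} A" "continuous_on {0..1} B"
    "is_solution (abel_field A B) x" "is_solution (abel_field A B) y" "x 0 = y 0" "t \<in> {0..1}"
  shows "x t = y t"
  using diff_formula[OF assms(1-4)] assms(5,6) by force

lemma sol_unique_at:
  assumes "continuous_on {0..1} A" "continuous_on {0..1} B"
    "is_solution (abel_field A B) x" "is_solution (abel_field A B) y" "x s = y s" "s \<in> {0..1}" "t \<in> {0..1}"
  shows "x t = y t"
proof -
  have "x 0 = y 0" using diff_formula[OF assms(1-4)] assms(5,6) by force
  thus ?thesis using sol_unique assms by blast
qed

lemma sol_distinct:
  assumes "continuous_on {0..1} A" "continuous_on {0..1} B"
    "is_solution (abel_field A B) x" "is_solution (abel_field A B) y" "x 0 \<noteq> y 0" "t \<in> {0..1}"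
  shows "x t \<noteq> y t"
  using diff_formula[OF assms(1-4)] assms(5,6) by force

lemma const_sol:
  assumes "\<And>t. t \<in> {0..1} \<Longrightarrow> abel_field A B t c = 0"
  shows "is_solution (abel_field A B) (\<lambda>t. c)"
  unfolding is_solution_def using assms by (auto intro: DERIV_const)

lemma sol_nonzero:
  assumes "continuous_on {0..1} A" "continuous_on {0..1} B"
    "is_solution (abel_field A B) x" "x 0 \<noteq> 0" "t \<in> {0..1}"
  shows "x t \<noteq> 0"
proof -
  have z: "is_solution (abel_field A B) (\<lambda>t. 0)"
    by (rule const_sol) (simp add: abel_field_def)
  show ?thesis using sol_distinct[OF assms(1,2,3) z] assms by auto
qed

lemma poincare_eq:
  assumes "continuous_on {0..1} A" "continuous_on {0..1} B" "is_solution (abel_field A B) x"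
  shows "poincare (abel_field A B) (x 0) = x 1"
  unfolding poincare_def
proof (rule the_equality)
  show "\<exists>xa. is_solution (abel_field A B) xa \<and> xa 0 = x 0 \<and> xa 1 = x 1" using assms by blast
  fix y assume "\<exists>xa. is_solution (abel_field A B) xa \<and> xa 0 = x 0 \<and> xa 1 = y"
  then obtain z where "is_solution (abel_field A B) z" "z 0 = x 0" "z 1 = y" by blast
  thus "y = x 1" using sol_unique[OF assms(1,2) _ assms(3), of z 1] by auto
qed

lemma lin_periodic_integral:
  fixes w k :: "real \<Rightarrow> real"
  assumes der: "\<And>t. t \<in> {0..1} \<Longrightarrow> (w has_real_derivative k t * w t) (at t within {0..1})"
    and kc: "continuous_on {0..1} k" and per: "w 1 = w 0" and nz: "w 0 \<noteq> 0"
  shows "(k has_integral 0) {0..1}"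
proof -
  have "w 1 = w 0 * exp (integral {0..1} k)" using bspec[OF lin_formula[OF der kc], of 1] by simp
  hence "exp (integral {0..1} k) = 1" using per nz by simp
  hence i0: "integral {0..1} k = 0" by simp
  have "k integrable_on {0..1}" by (rule integrable_continuous_real[OF kc])
  from integrable_integral[OF this] show ?thesis unfolding i0 .
qed

lemma pf: fixes \<alpha> \<beta> x N :: real
  assumes b: "\<beta> \<noteq> 0" and w: "\<alpha>*x+\<beta> \<noteq> 0"
  shows "(1/\<beta>)*N - (\<alpha>/\<beta>^2)*(x*N) + (\<alpha>/\<beta>^2)*(\<alpha>*x^2*N/(\<alpha>*x+\<beta>)) = N/(\<alpha>*x+\<beta>)"
proof -
  obtain vv where vv: "vv = \<alpha>*x+\<beta>" by blast
  have ax: "\<alpha>*x = vv - \<beta>" using vv by simp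
  have vnz: "vv \<noteq> 0" using vv w by simp
  have e1: "(\<alpha>/\<beta>^2)*(x*N) = (vv - \<beta>)*N/\<beta>^2"
  proof -
    have "(\<alpha>/\<beta>^2)*(x*N) = (\<alpha>*x)*N/\<beta>^2" by simp
    thus ?thesis using ax by simp
  qed
  have e2: "(\<alpha>/\<beta>^2)*(\<alpha>*x^2*N/(\<alpha>*x+\<beta>)) = (vv - \<beta>)^2*N/(\<beta>^2* vv)"
  proof -
    have "(\<alpha>/\<beta>^2)*(\<alpha>*x^2*N/(\<alpha>*x+\<beta>)) = (\<alpha>*x)^2*N/(\<beta>^2* vv)" using vv by (simp add: power2_eq_square)
    thus ?thesis using ax by simp
  qed
  have "(1/\<beta>)*N - (vv - \<beta>)*N/\<beta>^2 + (vv - \<beta>)^2*N/(\<beta>^2* vv) = N/vv"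
    using b vnz by (simp add: field_simps power2_eq_square)
  moreover have "N/(\<alpha>*x+\<beta>) = N/vv" using vv by simp
  ultimately show ?thesis using e1 e2 by linarith
qed
lemma deriv_inv2: "x \<noteq> (0::real) \<Longrightarrow> ((\<lambda>y. - (inverse y ^ 2) / 2) has_real_derivative (inverse x)^3) (at x)"
  by (rule DERIV_cong[OF DERIV_cdivide[OF DERIV_minus[OF DERIV_power[OF DERIV_inverse[of x UNIV]]]]])
     (simp_all add: power2_eq_square power3_eq_cube)

lemma hi_cong: "(f has_integral i) S \<Longrightarrow> (\<And>t. t \<in> S \<Longrightarrow> f t = g t) \<Longrightarrow> (g has_integral i) S"
  using has_integral_cong[of S f g i] by blast

lemma ftc_periodic:
  fixes F F' :: "real \<Rightarrow> real"
  assumes x: "is_solution f x" and per: "x 1 = x 0"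
    and dF: "\<And>t. t \<in> {0..1} \<Longrightarrow> (F has_real_derivative F' (x t)) (at (x t))"
  shows "((\<lambda>t. F' (x t) * f t (x t)) has_integral 0) {0..1}"
proof -
  have "((\<lambda>t. F' (x t) * f t (x t)) has_integral F (x 1) - F (x 0)) {0..1}"
  proof (rule fundamental_theorem_of_calculus[where f="\<lambda>t. F (x t)"])
    fix t :: real assume t: "t \<in> {0..1}"
    have "(x has_real_derivative f t (x t)) (at t within {0..1})" using x t unfolding is_solution_def by auto
    from DERIV_chain2[OF dF[OF t] this]
    show "((\<lambda>t. F (x t)) has_vector_derivative F' (x t) * f t (x t)) (at t within {0..1})"
      by (simp add: has_real_derivative_iff_has_vector_derivative)
  qed simp
  thus ?thesis using per by simp
qed

context
  fixes A B x :: "real \<Rightarrow> real"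
  assumes Ac: "continuous_on {0..1} A" and Bc: "continuous_on {0..1} B"
    and xs: "is_solution (abel_field A B) x" and per: "x 1 = x 0" and nz: "x 0 \<noteq> 0"
begin

lemma xc: "continuous_on {0..1} x" by (rule sol_cont[OF xs])

lemma xnz: "t \<in> {0..1} \<Longrightarrow> x t \<noteq> 0" by (rule sol_nonzero[OF Ac Bc xs nz])

lemma xder: "t \<in> {0..1} \<Longrightarrow> (x has_real_derivative A t * (x t)^3 + B t * (x t)^2) (at t within {0..1})"
  using xs unfolding is_solution_def abel_field_def by auto

lemma I1: "((\<lambda>t. A t * (x t)^2 + B t * x t) has_integral 0) {0..1}"
proof (rule lin_periodic_integral[where w=x, OF _ _ per nz])
  show "continuous_on {0..1} (\<lambda>t. A t * (x t)\<^sup>2 + B t * x t)"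
    by (intro continuous_intros Ac Bc xc)
  fix t :: real assume t: "t \<in> {0..1}"
  have "A t * (x t)^3 + B t * (x t)^2 = (A t * (x t)\<^sup>2 + B t * x t) * x t"
    by (simp add: algebra_simps power2_eq_square power3_eq_cube)
  thus "(x has_real_derivative (A t * (x t)\<^sup>2 + B t * x t) * x t) (at t within {0..1})"
    using xder[OF t] by simp
qed

lemma I2: "((\<lambda>t. A t * x t + B t) has_integral 0) {0..1}"
proof -
  have d: "((\<lambda>y. - inverse y) has_real_derivative (inverse (x t))^2) (at (x t))" if t: "t \<in> {0..1}" for t
    using DERIV_minus[OF DERIV_inverse[OF xnz[OF t], of UNIV]] by (simp add: power2_eq_square)
  have h: "((\<lambda>t. (inverse (x t))^2 * abel_field A B t (x t)) has_integral 0) {0..1}"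
    by (rule ftc_periodic[OF xs per d])
  moreover have "(inverse (x t))^2 * abel_field A B t (x t) = A t * x t + B t" if "t \<in> {0..1}" for t
    using xnz[OF that] unfolding abel_field_def by (simp add: field_simps power2_eq_square power3_eq_cube)
  ultimately show ?thesis by (rule hi_cong)
qed

lemma I3: "((\<lambda>t. (A t * x t + B t) / x t) has_integral 0) {0..1}"
proof -
  have d: "((\<lambda>y. - (inverse y ^ 2) / 2) has_real_derivative (inverse (x t))^3) (at (x t))" if t: "t \<in> {0..1}" for t
    by (rule deriv_inv2[OF xnz[OF t]])
  have h: "((\<lambda>t. (inverse (x t))^3 * abel_field A B t (x t)) has_integral 0) {0..1}"
    by (rule ftc_periodic[OF xs per d])
  moreover have "(inverse (x t))^3 * abel_field A B t (x t) = (A t * x t + B t) / x t" if "t \<in> {0..1}" for t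
    using xnz[OF that] unfolding abel_field_def by (simp add: field_simps power2_eq_square power3_eq_cube)
  ultimately show ?thesis by (rule hi_cong)
qed

lemma Iw:
  assumes wnz: "\<forall>t\<in>{0..1}. \<alpha> * x t + \<beta> \<noteq> 0"
  shows "((\<lambda>t. \<alpha> * (x t)^2 * (A t * x t + B t) / (\<alpha> * x t + \<beta>)) has_integral 0) {0..1}"
proof (rule lin_periodic_integral[where w="\<lambda>t. \<alpha> * x t + \<beta>"])
  show "continuous_on {0..1} (\<lambda>t. \<alpha> * (x t)\<^sup>2 * (A t * x t + B t) / (\<alpha> * x t + \<beta>))"
    using wnz by (intro continuous_intros Ac Bc xc) auto
  show "\<alpha> * x 1 + \<beta> = \<alpha> * x 0 + \<beta>" using per by simp
  show "\<alpha> * x 0 + \<beta> \<noteq> 0" using wnz by auto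
  fix t :: real assume t: "t \<in> {0..1}"
  have "((\<lambda>t. \<alpha> * x t + \<beta>) has_real_derivative \<alpha> * (A t * (x t)^3 + B t * (x t)^2) + 0) (at t within {0..1})"
    by (intro DERIV_add DERIV_cmult xder[OF t] DERIV_const)
  moreover have "\<alpha> * (A t * (x t)^3 + B t * (x t)^2) + 0 = \<alpha> * (x t)^2 * (A t * x t + B t) / (\<alpha> * x t + \<beta>) * (\<alpha> * x t + \<beta>)"
    using wnz t by (simp add: field_simps power2_eq_square power3_eq_cube)
  ultimately show "((\<lambda>t. \<alpha> * x t + \<beta>) has_real_derivative \<alpha> * (x t)^2 * (A t * x t + B t) / (\<alpha> * x t + \<beta>) * (\<alpha> * x t + \<beta>)) (at t within {0..1})"
    by simp
qed

lemma G_integral: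
  assumes ab: "\<alpha> \<noteq> 0 \<or> \<beta> \<noteq> 0" and wnz: "\<forall>t\<in>{0..1}. \<alpha> * x t + \<beta> \<noteq> 0"
  shows "((\<lambda>t. (A t * x t + B t) / (\<alpha> * x t + \<beta>)) has_integral 0) {0..1}"
proof (cases "\<beta> = 0")
  case True
  hence a: "\<alpha> \<noteq> 0" using ab by auto
  have "((\<lambda>t. (1/\<alpha>) * ((A t * x t + B t) / x t)) has_integral (1/\<alpha>) * 0) {0..1}"
    by (rule has_integral_mult_right[OF I3])
  hence "((\<lambda>t. (1/\<alpha>) * ((A t * x t + B t) / x t)) has_integral 0) {0..1}" by simp
  thus ?thesis by (rule hi_cong) (simp add: True)
next
  case False
  have "((\<lambda>t. (1/\<beta>) * (A t * x t + B t) - (\<alpha>/\<beta>^2) * (A t * (x t)^2 + B t * x t)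
            + (\<alpha>/\<beta>^2) * (\<alpha> * (x t)^2 * (A t * x t + B t) / (\<alpha> * x t + \<beta>))) has_integral
         (1/\<beta>) * 0 - (\<alpha>/\<beta>^2) * 0 + (\<alpha>/\<beta>^2) * 0) {0..1}"
    by (intro has_integral_add has_integral_diff has_integral_mult_right I1 I2 Iw wnz)
  hence "((\<lambda>t. (1/\<beta>) * (A t * x t + B t) - (\<alpha>/\<beta>^2) * (A t * (x t)^2 + B t * x t)
            + (\<alpha>/\<beta>^2) * (\<alpha> * (x t)^2 * (A t * x t + B t) / (\<alpha> * x t + \<beta>))) has_integral 0) {0..1}"
    by simp
  moreover have "(1/\<beta>) * (A t * x t + B t) - (\<alpha>/\<beta>^2) * (A t * (x t)^2 + B t * x t)
            + (\<alpha>/\<beta>^2) * (\<alpha> * (x t)^2 * (A t * x t + B t) / (\<alpha> * x t + \<beta>))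
          = (A t * x t + B t) / (\<alpha> * x t + \<beta>)" if t: "t \<in> {0..1}" for t
  proof -
    have w: "\<alpha> * x t + \<beta> \<noteq> 0" using wnz t by auto
    have "A t * (x t)^2 + B t * x t = x t * (A t * x t + B t)" by (simp add: algebra_simps power2_eq_square)
    thus ?thesis using pf[OF False w, of "A t * x t + B t"] by (simp add: mult.assoc)
  qed
  ultimately show ?thesis by (rule hi_cong)
qed


end

lemma hi_const01: "((\<lambda>t::real. c) has_integral (c::real)) {0..1}"
  using has_integral_const_real[of c 0 1] by simp

lemma pos_integral_pos:
  fixes h :: "real \<Rightarrow> real"
  assumes hc: "continuous_on {0..1} h" and pos: "\<forall>t\<in>{0..1}. h t > 0" and hi: "(h has_integral I) {0..1}"
  shows "I > 0"
proof -
  obtain t0 where t0: "t0 \<in> {0..1}" "\<forall>u\<in>{0..1}. h t0 \<le> h u"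
    using continuous_attains_inf[OF compact_Icc _ hc] by fastforce
  have m: "h t0 > 0" using pos t0 by auto
  have c: "((\<lambda>t::real. h t0) has_integral h t0) {0..1}"
    by (rule hi_const01)
  have "h t0 \<le> I" by (rule has_integral_le[OF c hi]) (use t0 in auto)
  thus ?thesis using m by linarith
qed

lemma nonvanish_integral:
  fixes h :: "real \<Rightarrow> real"
  assumes hc: "continuous_on {0..1} h" and nz: "\<forall>t\<in>{0..1}. h t \<noteq> 0" and hi: "(h has_integral I) {0..1}"
  shows "I \<noteq> 0"
proof -
  have "(\<forall>t\<in>{0..1}. h t > 0) \<or> (\<forall>t\<in>{0..1}. h t < 0)"
  proof (rule ccontr)
    assume "\<not> ?thesis"
    then obtain t1 t2 where t1: "t1 \<in> {0..1}" "h t1 \<le> 0" and t2: "t2 \<in> {0..1}" "h t2 \<ge> 0" by force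
    have "\<exists>s. min t1 t2 \<le> s \<and> s \<le> max t1 t2 \<and> h s = 0"
    proof (cases "t1 \<le> t2")
      case True
      have "continuous_on {t1..t2} h" by (rule continuous_on_subset[OF hc]) (use t1 t2 in auto)
      from IVT'[of h t1 0 t2, OF _ _ True this] t1 t2 True show ?thesis by auto
    next
      case False
      have "continuous_on {t2..t1} h" by (rule continuous_on_subset[OF hc]) (use t1 t2 in auto)
      from IVT2'[of h t1 0 t2, OF _ _ _ this] t1 t2 False show ?thesis by auto
    qed
    then obtain s where "min t1 t2 \<le> s" "s \<le> max t1 t2" "h s = 0" by blast
    moreover have "s \<in> {0..1}" using calculation t1 t2 by auto
    ultimately show False using nz by auto
  qed
  thus ?thesis
  proof
    assume "\<forall>t\<in>{0..1}. h t > 0" thus ?thesis using pos_integral_pos[OF hc _ hi] by auto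
  next
    assume n: "\<forall>t\<in>{0..1}. h t < 0"
    have "continuous_on {0..1} (\<lambda>t. - h t)" by (intro continuous_intros hc)
    moreover have "((\<lambda>t. - h t) has_integral - I) {0..1}" by (rule has_integral_neg[OF hi])
    ultimately have "- I > 0" using pos_integral_pos[of "\<lambda>t. - h t" "- I"] n by auto
    thus ?thesis by auto
  qed
qed

lemma cross_down_impossible:
  fixes w D :: "real \<Rightarrow> real"
  assumes der: "\<And>t. t\<in>{0..1} \<Longrightarrow> (w has_real_derivative D t) (at t within {0..1})"
    and pos: "\<And>t. t \<in> {0..1} \<Longrightarrow> w t = 0 \<Longrightarrow> D t > 0"
    and s: "0 \<le> s0" "s0 < s1" "s1 \<le> 1" and ws: "w s0 > 0" "w s1 < 0"
  shows False
proof -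
  have wc: "continuous_on {0..1} w"
    using der by (meson DERIV_continuous continuous_on_eq_continuous_within)
  have wc': "continuous_on {s0..s1} w" by (rule continuous_on_subset[OF wc]) (use s in auto)
  define S where "S = {t \<in> {s0..s1}. (\<lambda>_. 0) t \<le> w t}"
  have cS: "closed S" unfolding S_def
    by (rule continuous_on_closed_Collect_le[OF continuous_on_const wc' closed_atLeastAtMost])
  have "s0 \<in> S" using ws s unfolding S_def by auto
  hence neS: "S \<noteq> {}" by auto
  have bS: "bdd_above S" unfolding S_def by (rule bdd_aboveI[of _ s1]) auto
  define \<tau> where "\<tau> = Sup S"
  have tS: "\<tau> \<in> S" unfolding \<tau>_def by (rule closed_contains_Sup[OF neS bS cS])
  have up: "\<And>t. t \<in> S \<Longrightarrow> t \<le> \<tau>" unfolding \<tau>_def using bS by (simp add: cSup_upper)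
  have t1: "s0 \<le> \<tau>" "\<tau> \<le> s1" "0 \<le> w \<tau>" using tS unfolding S_def by auto
  have tlt: "\<tau> < s1" using t1 ws by (metis le_less not_le)
  have "\<exists>t. \<tau> \<le> t \<and> t \<le> s1 \<and> w t = 0"
  proof (rule IVT2')
    show "continuous_on {\<tau>..s1} w" by (rule continuous_on_subset[OF wc']) (use t1 in auto)
  qed (use t1 ws in auto)
  then obtain t where t: "\<tau> \<le> t" "t \<le> s1" "w t = 0" by blast
  hence "t \<in> S" unfolding S_def using t1 by auto
  hence "t \<le> \<tau>" by (rule up)
  hence "t = \<tau>" using t(1) by simp
  hence w0: "w \<tau> = 0" using t by simp
  have tI: "\<tau> \<in> {0..1}" using t1 s by auto
  obtain d where d: "d > 0" "\<forall>h>0. \<tau> + h \<in> {0..1} \<longrightarrow> h < d \<longrightarrow> w \<tau> < w (\<tau> + h)"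
    using has_real_derivative_pos_inc_right[OF der[OF tI] pos[OF tI w0]] by blast
  define h where "h = min (d/2) (s1 - \<tau>)"
  have h: "h > 0" "h < d" "\<tau> + h \<le> s1" using d tlt unfolding h_def by auto
  have "\<tau> + h \<in> {0..1}" using h t1 s by auto
  hence "w (\<tau> + h) > 0" using d(2)[rule_format, of h] h w0 by simp
  hence "\<tau> + h \<in> S" unfolding S_def using h t1 by auto
  hence "\<tau> + h \<le> \<tau>" by (rule up)
  thus False using h by auto
qed

lemma no_zero_periodic:
  fixes w D :: "real \<Rightarrow> real"
  assumes der: "\<And>t. t\<in>{0..1} \<Longrightarrow> (w has_real_derivative D t) (at t within {0..1})"
    and per: "w 1 = w 0"
    and pos: "\<And>t. t \<in> {0..1} \<Longrightarrow> w t = 0 \<Longrightarrow> D t > 0"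
  shows "\<forall>t\<in>{0..1}. w t \<noteq> 0"
proof (rule ccontr)
  assume "\<not> ?thesis"
  then obtain t0 where t0: "t0 \<in> {0..1}" "w t0 = 0" by auto
  have I01: "(0::real) \<in> {0..1}" "(1::real) \<in> {0..1}" by auto
  consider "w 0 = 0" | "w 0 > 0" | "w 0 < 0" by linarith
  thus False
  proof cases
    case 1
    obtain d where d: "d > 0" "\<forall>h>0. 0 + h \<in> {0..1} \<longrightarrow> h < d \<longrightarrow> w 0 < w (0 + h)"
      using has_real_derivative_pos_inc_right[OF der[OF I01(1)] pos[OF I01(1) 1]] by blast
    have w1: "w 1 = 0" using 1 per by simp
    obtain d' where d': "d' > 0" "\<forall>h>0. 1 - h \<in> {0..1} \<longrightarrow> h < d' \<longrightarrow> w (1 - h) < w 1"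
      using has_real_derivative_pos_inc_left[OF der[OF I01(2)] pos[OF I01(2) w1]] by blast
    define h where "h = min (d/2) (1/2)"
    define h' where "h' = min (d'/2) (1/3)"
    have hh: "h > 0" "h < d" "h \<le> 1/2" using d(1) unfolding h_def by auto
    have hh': "h' > 0" "h' < d'" "h' \<le> 1/3" using d'(1) unfolding h'_def by auto
    have "w h > 0" using d(2)[rule_format, of h] hh 1 by simp
    moreover have "w (1 - h') < 0" using d'(2)[rule_format, of h'] hh' w1 by simp
    moreover have "0 \<le> h" "h < 1 - h'" "1 - h' \<le> 1" using hh hh' by auto
    ultimately show False using cross_down_impossible[OF der pos, of h "1 - h'"] by linarith
  next
    case 2
    have "t0 \<noteq> 0" "t0 \<noteq> 1" using t0 2 per by auto
    hence tpos: "0 < t0" "t0 < 1" using t0(1) by auto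
    obtain d where d: "d > 0" "\<forall>h>0. t0 - h \<in> {0..1} \<longrightarrow> h < d \<longrightarrow> w (t0 - h) < w t0"
      using has_real_derivative_pos_inc_left[OF der[OF t0(1)] pos[OF t0]] by blast
    define h where "h = min (d/2) (t0/2)"
    have hh: "h > 0" "h < d" "h \<le> t0/2" using d(1) tpos unfolding h_def by auto
    have "w (t0 - h) < 0" using d(2)[rule_format, of h] hh t0 tpos by simp
    moreover have "0 < t0 - h" "t0 - h \<le> 1" using hh tpos by auto
    ultimately show False using cross_down_impossible[OF der pos, of 0 "t0 - h"] 2 by linarith
  next
    case 3
    have "t0 \<noteq> 0" "t0 \<noteq> 1" using t0 3 per by auto
    hence tpos: "0 < t0" "t0 < 1" using t0(1) by auto
    obtain d where d: "d > 0" "\<forall>h>0. t0 + h \<in> {0..1} \<longrightarrow> h < d \<longrightarrow> w t0 < w (t0 + h)"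
      using has_real_derivative_pos_inc_right[OF der[OF t0(1)] pos[OF t0]] by blast
    define h where "h = min (d/2) ((1 - t0)/2)"
    have hh: "h > 0" "h < d" using d(1) tpos unfolding h_def by auto
    have hh3: "h \<le> (1 - t0)/2" unfolding h_def by (rule min.cobounded2)
    have "w (t0 + h) > 0" using d(2)[rule_format, of h] hh hh3 t0 tpos by simp
    moreover have "0 \<le> t0 + h" "t0 + h < 1" using hh hh3 tpos by auto
    ultimately show False using cross_down_impossible[OF der pos, of "t0 + h" 1] 3 per by linarith
  qed
qed

lemma integral_abs_bound:
  fixes k :: "real \<Rightarrow> real"
  assumes kc: "continuous_on {0..1} k" and t: "t \<in> {0..1}" and L: "L \<ge> 0"
    and b: "\<forall>u\<in>{0..t}. \<bar>k u\<bar> \<le> L"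
  shows "\<bar>integral {0..t} k\<bar> \<le> L"
proof -
  have kc': "continuous_on {0..t} k" by (rule continuous_on_subset[OF kc]) (use t in auto)
  have "(k has_integral integral {0..t} k) {0..t}"
    by (rule integrable_integral[OF integrable_continuous_real[OF kc']])
  from has_integral_bound_real[OF L finite.emptyI this] b t
  have "norm (integral {0..t} k) \<le> L * t" by auto
  also have "\<dots> \<le> L" using t L by (simp add: mult_left_le)
  finally show ?thesis by simp
qed

lemma hdiff_bound:
  fixes A B x y :: "real \<Rightarrow> real"
  assumes "\<bar>x t\<bar> \<le> M" "\<bar>y t - x t\<bar> \<le> 1" "\<bar>A t\<bar> \<le> KA" "\<bar>B t\<bar> \<le> KA"
  shows "\<bar>hdiff A B x y t\<bar> \<le> KA * (3*(M+1)^2 + 2*(M+1))"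
proof -
  have yb: "\<bar>y t\<bar> \<le> M + 1" using assms(1,2) by linarith
  have xb: "\<bar>x t\<bar> \<le> M + 1" using assms(1) by linarith
  have M0: "0 \<le> M + 1" using xb by linarith
  have K0: "0 \<le> KA" using assms(3) by linarith
  have q: "\<bar>(x t)^2 + x t * y t + (y t)^2\<bar> \<le> 3*(M+1)^2"
  proof -
    have "\<bar>(x t)^2 + x t * y t + (y t)^2\<bar> \<le> \<bar>x t\<bar>*\<bar>x t\<bar> + \<bar>x t\<bar> * \<bar>y t\<bar> + \<bar>y t\<bar>*\<bar>y t\<bar>"
      by (simp add: abs_mult power2_eq_square abs_triangle_ineq order_trans[OF abs_triangle_ineq])
    also have "\<dots> \<le> (M+1)*(M+1) + (M+1)*(M+1) + (M+1)*(M+1)"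
      by (intro add_mono mult_mono xb yb M0) auto
    finally show ?thesis by (simp add: power2_eq_square)
  qed
  have l: "\<bar>x t + y t\<bar> \<le> 2*(M+1)" by (rule order_trans[OF abs_triangle_ineq]) (use xb yb in simp)
  have "\<bar>hdiff A B x y t\<bar> \<le> \<bar>A t\<bar> * \<bar>(x t)^2 + x t * y t + (y t)^2\<bar> + \<bar>B t\<bar> * \<bar>x t + y t\<bar>"
    unfolding hdiff_def by (simp add: abs_mult order_trans[OF abs_triangle_ineq])
  also have "\<dots> \<le> KA * (3*(M+1)^2) + KA * (2*(M+1))"
    by (intro add_mono mult_mono q l assms(3,4)) (use K0 in auto)
  finally show ?thesis by (simp add: algebra_simps)
qed

lemma hdiff_close:
  fixes A B x y :: "real \<Rightarrow> real"
  assumes "\<bar>x t\<bar> \<le> M" "\<bar>y t - x t\<bar> \<le> 1" "\<bar>A t\<bar> \<le> KA" "\<bar>B t\<bar> \<le> KA"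
  shows "\<bar>hdiff A B x y t - (3 * A t * (x t)^2 + 2 * B t * x t)\<bar> \<le> \<bar>y t - x t\<bar> * (KA * (3*M+2))"
proof -
  have yb: "\<bar>y t\<bar> \<le> M + 1" using assms(1,2) by linarith
  have K0: "0 \<le> KA" using assms(3) by linarith
  have e: "hdiff A B x y t - (3 * A t * (x t)^2 + 2 * B t * x t) = (y t - x t) * (A t * (y t + 2 * x t) + B t)"
    unfolding hdiff_def by (simp add: algebra_simps power2_eq_square)
  have "\<bar>A t * (y t + 2 * x t) + B t\<bar> \<le> \<bar>A t\<bar> * \<bar>y t + 2 * x t\<bar> + \<bar>B t\<bar>"
    by (simp add: abs_mult order_trans[OF abs_triangle_ineq])
  also have "\<dots> \<le> KA * (3*M+1) + KA"
    by (intro add_mono mult_mono assms(3,4)) (use assms(1) yb K0 in auto)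
  finally have "\<bar>A t * (y t + 2 * x t) + B t\<bar> \<le> KA * (3*M+2)" by (simp add: algebra_simps)
  thus ?thesis unfolding e abs_mult by (simp add: mult_left_mono)
qed

context
  fixes A B x :: "real \<Rightarrow> real" and M KA L :: real
  assumes Ac: "continuous_on {0..1} A" and Bc: "continuous_on {0..1} B"
    and xs: "is_solution (abel_field A B) x"
    and xM: "\<forall>t\<in>{0..1}. \<bar>x t\<bar> \<le> M" and AK: "\<forall>t\<in>{0..1}. \<bar>A t\<bar> \<le> KA" and BK: "\<forall>t\<in>{0..1}. \<bar>B t\<bar> \<le> KA"
    and L_def: "L = KA * (3*(M+1)^2 + 2*(M+1))"
begin

lemma L0: "L \<ge> 0"
proof -
  have "\<bar>A 0\<bar> \<le> KA" "\<bar>x 0\<bar> \<le> M" using AK xM by auto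
  hence "KA \<ge> 0" "M + 1 \<ge> 0" by linarith+
  thus ?thesis unfolding L_def by simp
qed

lemma bootstrap:
  assumes ys: "is_solution (abel_field A B) y" and small: "\<bar>y 0 - x 0\<bar> * exp L \<le> 1/2"
  shows "\<forall>t\<in>{0..1}. \<bar>y t - x t\<bar> \<le> \<bar>y 0 - x 0\<bar> * exp L"
proof -
  define d where "d t = y t - x t" for t
  define k where "k = hdiff A B x y"
  have form: "\<forall>t\<in>{0..1}. d t = d 0 * exp (integral {0..t} k)"
    unfolding d_def k_def by (rule diff_formula[OF Ac Bc xs ys])
  have kc: "continuous_on {0..1} k" unfolding k_def by (intro hdiff_cont Ac Bc sol_cont[OF xs] sol_cont[OF ys])
  have dc: "continuous_on {0..1} d" unfolding d_def by (intro continuous_intros sol_cont[OF xs] sol_cont[OF ys])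
  have key: "\<bar>d t\<bar> \<le> \<bar>d 0\<bar> * exp L" if t: "t \<in> {0..1}" and b: "\<forall>u\<in>{0..t}. \<bar>d u\<bar> \<le> 1" for t
  proof -
    have "\<forall>u\<in>{0..t}. \<bar>k u\<bar> \<le> L"
    proof
      fix u assume u: "u \<in> {0..t}"
      hence u1: "u \<in> {0..1}" using t by auto
      show "\<bar>k u\<bar> \<le> L" unfolding k_def L_def
        by (rule hdiff_bound) (use xM AK BK u1 b u in \<open>auto simp: d_def\<close>)
    qed
    hence ib: "\<bar>integral {0..t} k\<bar> \<le> L" by (rule integral_abs_bound[OF kc t L0])
    have "d t = d 0 * exp (integral {0..t} k)" using form t by blast
    hence "\<bar>d t\<bar> = \<bar>d 0\<bar> * exp (integral {0..t} k)" by (simp add: abs_mult)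
    also have "\<dots> \<le> \<bar>d 0\<bar> * exp L" using ib by (intro mult_left_mono) auto
    finally show ?thesis .
  qed
  have lt1: "\<forall>t\<in>{0..1}. \<bar>d t\<bar> < 1"
  proof (rule ccontr)
    assume na: "\<not> ?thesis"
    define S where "S = {t \<in> {0..1}. (\<lambda>_. 1) t \<le> (\<lambda>t. \<bar>d t\<bar>) t}"
    have neS: "S \<noteq> {}" using na unfolding S_def by force
    have cS: "closed S" unfolding S_def
      by (rule continuous_on_closed_Collect_le[OF continuous_on_const _ closed_atLeastAtMost]) (intro continuous_intros dc)
    have bS: "bdd_below S" unfolding S_def by (rule bdd_belowI[of _ 0]) auto
    define \<tau> where "\<tau> = Inf S"
    have tS: "\<tau> \<in> S" unfolding \<tau>_def by (rule closed_contains_Inf[OF neS bS cS])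
    have low: "\<And>u. u \<in> S \<Longrightarrow> \<tau> \<le> u" unfolding \<tau>_def using bS by (simp add: cInf_lower)
    have t01: "\<tau> \<in> {0..1}" "1 \<le> \<bar>d \<tau>\<bar>" using tS unfolding S_def by auto
    have "1 \<le> exp L" using L0 by simp
    hence "\<bar>d 0\<bar> * 1 \<le> \<bar>d 0\<bar> * exp L" by (intro mult_left_mono) auto
    hence "\<bar>d 0\<bar> \<le> \<bar>d 0\<bar> * exp L" by simp
    from order_trans[OF this small[folded d_def]] have d0: "\<bar>d 0\<bar> \<le> 1/2" .
    have tpos: "\<tau> > 0"
    proof (rule ccontr)
      assume "\<not> \<tau> > 0" hence "\<tau> = 0" using t01 by auto
      thus False using t01 d0 by auto
    qed
    have before: "\<bar>d t\<bar> \<le> 1/2" if t: "t \<in> {0..<\<tau>}" for t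
    proof -
      have t1: "t \<in> {0..1}" using t t01 by auto
      have "\<forall>u\<in>{0..t}. \<bar>d u\<bar> \<le> 1"
      proof
        fix u assume u: "u \<in> {0..t}"
        have "u \<in> {0..1}" using u t1 by auto
        moreover have "u < \<tau>" using u t by auto
        ultimately have "u \<notin> S" using low by force
        thus "\<bar>d u\<bar> \<le> 1" using \<open>u \<in> {0..1}\<close> unfolding S_def by auto
      qed
      from key[OF t1 this] show ?thesis using small unfolding d_def by linarith
    qed
    define T where "T = {t \<in> {0..1}. (\<lambda>t. \<bar>d t\<bar>) t \<le> (\<lambda>_. 1/2) t}"
    have cT: "closed T" unfolding T_def
      by (rule continuous_on_closed_Collect_le[OF _ continuous_on_const closed_atLeastAtMost]) (intro continuous_intros dc)
    have "{0..<\<tau>} \<subseteq> T" unfolding T_def using before t01 by auto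
    hence "closure {0..<\<tau>} \<subseteq> T" using cT by (rule closure_minimal)
    hence "{0..\<tau>} \<subseteq> T" using closure_atLeastLessThan[OF tpos] by simp
    hence "\<tau> \<in> T" using tpos by auto
    thus False using t01 unfolding T_def by auto
  qed
  show ?thesis
  proof
    fix t :: real assume t: "t \<in> {0..1}"
    have "\<forall>u\<in>{0..t}. \<bar>d u\<bar> \<le> 1" using lt1 t by (auto simp: less_imp_le)
    from key[OF t this] show "\<bar>y t - x t\<bar> \<le> \<bar>y 0 - x 0\<bar> * exp L" unfolding d_def .
  qed
qed

end

lemma poincare_deriv:
  fixes A B x :: "real \<Rightarrow> real"
  assumes Ac: "continuous_on {0..1} A" and Bc: "continuous_on {0..1} B"
    and xs: "is_solution (abel_field A B) x"
  shows "(poincare (abel_field A B) has_real_derivative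
           exp (integral {0..1} (\<lambda>t. 3 * A t * (x t)^2 + 2 * B t * x t)))
         (at (x 0) within poincare_domain (abel_field A B))"
proof -
  define f where "f = abel_field A B"
  define D where "D = poincare_domain f"
  define p where "p = x 0"
  obtain M where xM: "\<forall>t\<in>{0..1}. \<bar>x t\<bar> \<le> M" using cont_bound[OF sol_cont[OF xs]] by blast
  obtain K1 where K1: "\<forall>t\<in>{0..1}. \<bar>A t\<bar> \<le> K1" using cont_bound[OF Ac] by blast
  obtain K2 where K2: "\<forall>t\<in>{0..1}. \<bar>B t\<bar> \<le> K2" using cont_bound[OF Bc] by blast
  define KA where "KA = max K1 K2"
  have AK: "\<forall>t\<in>{0..1}. \<bar>A t\<bar> \<le> KA" using K1 unfolding KA_def by force
  have BK: "\<forall>t\<in>{0..1}. \<bar>B t\<bar> \<le> KA" using K2 unfolding KA_def by force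
  have KA0: "KA \<ge> 0" using AK by (meson abs_ge_zero atLeastAtMost_iff order_trans zero_le_one order_refl)
  have M0: "M \<ge> 0" using xM by (meson abs_ge_zero atLeastAtMost_iff order_trans zero_le_one order_refl)
  define L where "L = KA * (3*(M+1)^2 + 2*(M+1))"
  define L2 where "L2 = KA * (3*M+2)"
  have L20: "L2 \<ge> 0" unfolding L2_def using KA0 M0 by simp
  define h0 where "h0 t = 3 * A t * (x t)^2 + 2 * B t * x t" for t
  define I0 where "I0 = integral {0..1} h0"
  have h0c: "continuous_on {0..1} h0" unfolding h0_def by (intro continuous_intros Ac Bc sol_cont[OF xs])
  have h0i: "(h0 has_integral I0) {0..1}" unfolding I0_def
    by (rule integrable_integral[OF integrable_continuous_real[OF h0c]])
  define Y where "Y s = (SOME y. is_solution f y \<and> y 0 = s)" for s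
  have Ys: "is_solution f (Y s) \<and> Y s 0 = s" if "s \<in> D" for s
  proof -
    have "\<exists>y. is_solution f y \<and> y 0 = s" using that unfolding D_def poincare_domain_def by blast
    thus ?thesis unfolding Y_def by (rule someI_ex)
  qed
  define I where "I s = integral {0..1} (hdiff A B x (Y s))" for s
  have quot: "(poincare f s - poincare f p) / (s - p) = exp (I s)" if s: "s \<in> D" "s \<noteq> p" for s
  proof -
    have ys: "is_solution (abel_field A B) (Y s)" "Y s 0 = s" using Ys[OF s(1)] unfolding f_def by auto
    have "poincare f s = Y s 1" using poincare_eq[OF Ac Bc ys(1)] ys(2) unfolding f_def by simp
    moreover have "poincare f p = x 1" using poincare_eq[OF Ac Bc xs] unfolding f_def p_def by simp
    moreover have "Y s 1 - x 1 = (Y s 0 - x 0) * exp (I s)"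
      using bspec[OF diff_formula[OF Ac Bc xs ys(1)], of 1] unfolding I_def by simp
    ultimately show ?thesis using ys(2) s(2) unfolding p_def by simp
  qed
  have close: "\<bar>I s - I0\<bar> \<le> \<bar>s - p\<bar> * exp L * L2" if s: "s \<in> D" and sm: "\<bar>s - p\<bar> * exp L \<le> 1/2" for s
  proof -
    have ys: "is_solution (abel_field A B) (Y s)" "Y s 0 = s" using Ys[OF s] unfolding f_def by auto
    have bs: "\<forall>t\<in>{0..1}. \<bar>Y s t - x t\<bar> \<le> \<bar>Y s 0 - x 0\<bar> * exp L"
      by (rule bootstrap[OF Ac Bc xs xM AK BK L_def ys(1)]) (use sm ys(2) in \<open>simp add: p_def\<close>)
    have hc: "continuous_on {0..1} (hdiff A B x (Y s))"
      by (intro hdiff_cont Ac Bc sol_cont[OF xs] sol_cont[OF ys(1)])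
    have hi: "(hdiff A B x (Y s) has_integral I s) {0..1}" unfolding I_def
      by (rule integrable_integral[OF integrable_continuous_real[OF hc]])
    have di: "((\<lambda>t. hdiff A B x (Y s) t - h0 t) has_integral I s - I0) {0..1}"
      by (rule has_integral_diff[OF hi h0i])
    have pb: "norm (hdiff A B x (Y s) t - h0 t) \<le> \<bar>s - p\<bar> * exp L * L2" if t: "t \<in> {0..1}" for t
    proof -
      have b1: "\<bar>Y s t - x t\<bar> \<le> \<bar>s - p\<bar> * exp L" using bs t ys(2) unfolding p_def by auto
      have b2: "\<bar>Y s t - x t\<bar> \<le> 1" using order_trans[OF b1 sm] by simp
      have "\<bar>hdiff A B x (Y s) t - (3 * A t * (x t)^2 + 2 * B t * x t)\<bar> \<le> \<bar>Y s t - x t\<bar> * (KA * (3*M+2))"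
        by (rule hdiff_close) (use xM AK BK t b2 in auto)
      also have "\<dots> \<le> (\<bar>s - p\<bar> * exp L) * L2" unfolding L2_def
        by (rule mult_right_mono[OF b1]) (use L20 in \<open>simp add: L2_def\<close>)
      finally show ?thesis unfolding h0_def by simp
    qed
    have "norm (I s - I0) \<le> (\<bar>s - p\<bar> * exp L * L2) * 1"
      using has_integral_bound_real[OF _ finite.emptyI di, of "\<bar>s - p\<bar> * exp L * L2"] pb L20 by simp
    thus ?thesis by simp
  qed
  have ev1: "eventually (\<lambda>s. norm (I s - I0) \<le> \<bar>s - p\<bar> * exp L * L2) (at p within D)"
    unfolding eventually_at
  proof (intro exI conjI ballI impI)
    show "exp (- L) / 2 > 0" by simp
    fix s assume s: "s \<in> D" and sd: "s \<noteq> p \<and> dist s p < exp (- L) / 2"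
    have "\<bar>s - p\<bar> \<le> exp (- L) / 2" using sd by (simp add: dist_real_def)
    hence "\<bar>s - p\<bar> * exp L \<le> (exp (- L) / 2) * exp L" by (intro mult_right_mono) auto
    also have "\<dots> = 1/2" by (simp add: exp_minus field_simps)
    finally have "\<bar>s - p\<bar> * exp L \<le> 1/2" .
    from close[OF s this] show "norm (I s - I0) \<le> \<bar>s - p\<bar> * exp L * L2" by simp
  qed
  have g0: "((\<lambda>s. \<bar>s - p\<bar> * exp L * L2) \<longlongrightarrow> 0) (at p within D)"
  proof -
    have "((\<lambda>s. \<bar>s - p\<bar> * exp L * L2) \<longlongrightarrow> \<bar>p - p\<bar> * exp L * L2) (at p within D)"
      by (intro tendsto_intros)
    thus ?thesis by simp
  qed
  have "((\<lambda>s. I s - I0) \<longlongrightarrow> 0) (at p within D)" by (rule Lim_null_comparison[OF ev1 g0])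
  hence "(I \<longlongrightarrow> I0) (at p within D)" by (rule LIM_zero_cancel)
  hence lim1: "((\<lambda>s. exp (I s)) \<longlongrightarrow> exp I0) (at p within D)" by (rule tendsto_exp)
  have ev2: "eventually (\<lambda>s. exp (I s) = (poincare f s - poincare f p) / (s - p)) (at p within D)"
    unfolding eventually_at
  proof (intro exI conjI ballI impI)
    show "(1::real) > 0" by simp
    fix s assume s: "s \<in> D" and sd: "s \<noteq> p \<and> dist s p < 1"
    show "exp (I s) = (poincare f s - poincare f p) / (s - p)" using quot[OF s] sd by simp
  qed
  have "((\<lambda>s. (poincare f s - poincare f p) / (s - p)) \<longlongrightarrow> exp I0) (at p within D)"
    by (rule Lim_transform_eventually[OF lim1 ev2])
  thus ?thesis unfolding has_field_derivative_iff f_def D_def p_def I0_def h0_def .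
qed

lemma inv_flow:
  fixes U U' :: "real \<Rightarrow> real"
  assumes lohi: "lo < hi"
    and dU: "\<And>y. y \<in> {lo..hi} \<Longrightarrow> (U has_real_derivative U' y) (at y)"
    and pU: "\<And>y. y \<in> {lo..hi} \<Longrightarrow> U' y > 0"
    and x0: "lo < x0" "x0 < hi"
    and r1: "R \<le> U x0 - U lo" and r2: "R \<le> U hi - U x0"
    and sg: "\<sigma> = 1 \<or> \<sigma> = -1"
  shows "\<exists>Y. Y 0 = x0 \<and> (\<forall>\<tau>. \<bar>\<tau>\<bar> < R \<longrightarrow> (Y has_real_derivative \<sigma> * inverse (U' (Y \<tau>))) (at \<tau>))"
proof -
  have mono: "U a < U b" if ab: "lo \<le> a" "a < b" "b \<le> hi" for a b
  proof (rule DERIV_pos_imp_increasing[OF ab(2)])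
    fix x assume "a \<le> x" "x \<le> b"
    hence xi: "x \<in> {lo..hi}" using ab by auto
    show "\<exists>y. DERIV U x :> y \<and> y > 0" by (intro exI[of _ "U' x"] conjI dU[OF xi] pU[OF xi])
  qed
  have inj: "a = b" if "a \<in> {lo..hi}" "b \<in> {lo..hi}" "U a = U b" for a b
  proof (rule ccontr)
    assume "a \<noteq> b"
    hence "a < b \<or> b < a" by auto
    thus False
    proof
      assume "a < b" thus False using mono[of a b] that by auto
    next
      assume "b < a" thus False using mono[of b a] that by auto
    qed
  qed
  have Uc: "isCont U y" if "y \<in> {lo..hi}" for y using dU[OF that] by (rule DERIV_isCont)
  have Ucon: "continuous_on {lo..hi} U" by (intro continuous_at_imp_continuous_on ballI Uc)
  define g where "g u = (THE z. z \<in> {lo..hi} \<and> U z = u)" for u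
  have ginv: "g (U z) = z" if "z \<in> {lo..hi}" for z
    unfolding g_def by (rule the_equality) (use that inj in auto)
  have rng: "\<exists>z. lo < z \<and> z < hi \<and> U z = u" if uu: "U lo < u" "u < U hi" for u
  proof -
    obtain z where z: "lo \<le> z" "z \<le> hi" "U z = u"
      using IVT'[of U lo u hi, OF _ _ _ Ucon] uu lohi by auto
    have "z \<noteq> lo" "z \<noteq> hi" using z uu by auto
    thus ?thesis using z by (intro exI[of _ z]) auto
  qed
  have gder: "(g has_real_derivative inverse (U' (g u))) (at u)" "U (g u) = u" "g u \<in> {lo<..<hi}"
    if u: "U lo < u" "u < U hi" for u
  proof -
    obtain z where z: "lo < z" "z < hi" "U z = u" using rng[OF u] by blast
    have gz: "g u = z" using ginv[of z] z by auto
    show "U (g u) = u" "g u \<in> {lo<..<hi}" using gz z by auto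
    have ic: "isCont g (U z)"
      by (rule isCont_inverse_function2[OF z(1,2)]) (use ginv Uc in auto)
    have "(g has_real_derivative inverse (U' z)) (at u)"
    proof (rule DERIV_inverse_function[where a="U lo" and b="U hi"])
      show "(U has_real_derivative U' z) (at (g u))" using gz dU z by auto
      show "U' z \<noteq> 0" using pU z by (metis atLeastAtMost_iff less_imp_le less_irrefl)
      show "U lo < u" "u < U hi" by (rule u)+
      show "\<And>y. U lo < y \<Longrightarrow> y < U hi \<Longrightarrow> U (g y) = y"
      proof -
        fix y assume "U lo < y" "y < U hi"
        then obtain z' where "lo < z'" "z' < hi" "U z' = y" using rng by blast
        thus "U (g y) = y" using ginv[of z'] by auto
      qed
      show "isCont g u" using ic z by simp
    qed
    thus "(g has_real_derivative inverse (U' (g u))) (at u)" using gz by simp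
  qed
  define Y where "Y \<tau> = g (U x0 + \<sigma> * \<tau>)" for \<tau>
  have "Y 0 = x0" unfolding Y_def using ginv x0 by auto
  moreover have "(Y has_real_derivative \<sigma> * inverse (U' (Y \<tau>))) (at \<tau>)" if t: "\<bar>\<tau>\<bar> < R" for \<tau>
  proof -
    have st: "\<bar>\<sigma> * \<tau>\<bar> < R" using sg t by auto
    have u: "U lo < U x0 + \<sigma> * \<tau>" "U x0 + \<sigma> * \<tau> < U hi" using st r1 r2 by (auto simp: abs_less_iff)
    have d1: "((\<lambda>\<tau>. U x0 + \<sigma> * \<tau>) has_real_derivative \<sigma>) (at \<tau>)"
      using DERIV_add[OF DERIV_const DERIV_cmult[OF DERIV_ident]] by simp
    from DERIV_chain2[OF gder(1)[OF u] d1]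
    show ?thesis unfolding Y_def by (simp add: mult.commute)
  qed
  ultimately show ?thesis by blast
qed

lemma const_sign:
  fixes W :: "real \<Rightarrow> real"
  assumes Wc: "continuous_on {a..b} W" and nz: "\<forall>y\<in>{a..b}. W y \<noteq> 0"
    and y: "y \<in> {a..b}" and z: "z \<in> {a..b}"
  shows "W y * W z > 0"
proof (rule ccontr)
  assume "\<not> ?thesis"
  moreover have "W y \<noteq> 0" "W z \<noteq> 0" using nz y z by auto
  ultimately have c: "(W y < 0 \<and> W z > 0) \<or> (W y > 0 \<and> W z < 0)"
    by (auto simp: zero_less_mult_iff linorder_neq_iff)
  have sub: "closed_segment y z \<subseteq> {a..b}" using y z by (simp add: closed_segment_eq_real_ivl)
  have cs: "continuous_on (closed_segment y z) W" by (rule continuous_on_subset[OF Wc sub])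
  have "0 \<in> closed_segment (W y) (W z)" using c by (auto simp: closed_segment_eq_real_ivl)
  then obtain s where "s \<in> closed_segment y z" "W s = 0"
    using IVT'_closed_segment_real[OF _ cs] by blast
  thus False using nz sub by auto
qed

lemma auto_exist:
  fixes W :: "real \<Rightarrow> real"
  assumes Wc: "continuous_on UNIV W"
    and ord: "lo' < lo" "lo < x0" "x0 < hi" "hi < hi'"
    and nz: "\<forall>y\<in>{lo'..hi'}. W y \<noteq> 0"
    and Wb: "\<forall>y\<in>{lo..hi}. \<bar>W y\<bar> \<le> Wm"
    and r1: "R * Wm \<le> x0 - lo" and r2: "R * Wm \<le> hi - x0" and R: "R > 0"
  shows "\<exists>Y. Y 0 = x0 \<and> (\<forall>\<tau>. \<bar>\<tau>\<bar> < R \<longrightarrow> (Y has_real_derivative W (Y \<tau>)) (at \<tau>))"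
proof -
  define \<sigma> :: real where "\<sigma> = (if W x0 > 0 then 1 else -1)"
  have sg: "\<sigma> = 1 \<or> \<sigma> = -1" unfolding \<sigma>_def by auto
  have Wc': "continuous_on {lo'..hi'} W" by (rule continuous_on_subset[OF Wc]) auto
  have x0i: "x0 \<in> {lo'..hi'}" using ord by auto
  have spos: "\<sigma> * W y > 0" if y: "y \<in> {lo'..hi'}" for y
  proof -
    have "W x0 * W y > 0" by (rule const_sign[OF Wc' nz x0i y])
    moreover have "W x0 \<noteq> 0" using nz x0i by auto
    ultimately show ?thesis unfolding \<sigma>_def
      by (auto simp: zero_less_mult_iff)
  qed
  have iW: "continuous_on {lo'..hi'} (\<lambda>z. 1 / W z)" using nz by (intro continuous_intros Wc') auto
  define U where "U y = \<sigma> * integral {lo'..y} (\<lambda>z. 1 / W z)" for y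
  define U' where "U' y = \<sigma> / W y" for y
  have dU: "(U has_real_derivative U' y) (at y)" if y: "y \<in> {lo..hi}" for y
  proof -
    have yi: "y \<in> {lo'..hi'}" "lo' < y" "y < hi'" using y ord by auto
    have "((\<lambda>y. integral {lo'..y} (\<lambda>z. 1 / W z)) has_real_derivative 1 / W y) (at y within {lo'..hi'})"
      by (rule integral_has_real_derivative[OF iW yi(1)])
    hence "((\<lambda>y. integral {lo'..y} (\<lambda>z. 1 / W z)) has_real_derivative 1 / W y) (at y)"
      using at_within_Icc_at[OF yi(2,3)] by simp
    from DERIV_cmult[OF this, of \<sigma>] show ?thesis unfolding U_def U'_def by simp
  qed
  have U'abs: "U' y = 1 / \<bar>W y\<bar>" if y: "y \<in> {lo'..hi'}" for y
    using spos[OF y] sg unfolding U'_def by (auto simp: abs_if)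
  have pU: "U' y > 0" if y: "y \<in> {lo..hi}" for y
  proof -
    have "y \<in> {lo'..hi'}" using y ord by auto
    thus ?thesis using U'abs nz by auto
  qed
  have mvt_b: "R \<le> U b' - U a'" if ab: "lo \<le> a'" "a' < b'" "b' \<le> hi" "R * Wm \<le> b' - a'" for a' b'
  proof -
    have dU': "(U has_real_derivative U' y) (at y)" if "a' \<le> y" "y \<le> b'" for y
      using dU that ab by auto
    have cU: "continuous_on {a'..b'} U"
      by (intro continuous_at_imp_continuous_on ballI DERIV_isCont[OF dU']) auto
    have dif: "U differentiable (at x)" if "a' < x" "x < b'" for x
      unfolding real_differentiable_def using dU'[of x] that by auto
    obtain l z where lz: "a' < z" "z < b'" "DERIV U z :> l" "U b' - U a' = (b' - a') * l"
      using MVT[OF ab(2) cU dif] by blast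
    have zi: "z \<in> {lo..hi}" "z \<in> {lo'..hi'}" using lz ab ord by auto
    have l: "l = 1 / \<bar>W z\<bar>" using DERIV_unique[OF lz(3) dU[OF zi(1)]] U'abs[OF zi(2)] by simp
    have Wz: "\<bar>W z\<bar> > 0" "\<bar>W z\<bar> \<le> Wm" using nz zi Wb by auto
    have "R * \<bar>W z\<bar> \<le> R * Wm" using Wz R by (intro mult_left_mono) auto
    hence "R * \<bar>W z\<bar> \<le> b' - a'" using ab by linarith
    hence "R \<le> (b' - a') / \<bar>W z\<bar>" using Wz by (simp add: pos_le_divide_eq)
    thus ?thesis using lz l by simp
  qed
  have R1: "R \<le> U x0 - U lo" by (rule mvt_b) (use ord r1 in auto)
  have R2: "R \<le> U hi - U x0" by (rule mvt_b) (use ord r2 in auto)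
  obtain Y where Y: "Y 0 = x0" "\<And>\<tau>. \<bar>\<tau>\<bar> < R \<Longrightarrow> (Y has_real_derivative \<sigma> * inverse (U' (Y \<tau>))) (at \<tau>)"
  proof -
    have "lo < hi" using ord by auto
    from inv_flow[OF this dU pU ord(2,3) R1 R2 sg] show ?thesis using that by blast
  qed
  have "\<sigma> * inverse (U' w) = W w" for w
    using sg unfolding U'_def by (auto simp: field_simps)
  thus ?thesis using Y by (intro exI[of _ Y]) auto
qed

lemma W_nz:
  fixes a b x0 y :: real
  assumes x0: "x0 \<noteq> 0" and ab: "a \<noteq> 0 \<or> b \<noteq> 0" and sb: "b \<noteq> 0 \<Longrightarrow> \<bar>x0\<bar> < \<bar>b\<bar> / (2*\<bar>a\<bar>+1)"
    and y: "\<bar>y - x0\<bar> \<le> 3/4 * \<bar>x0\<bar>"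
  shows "y^2 * (a*y+b) \<noteq> 0"
proof -
  have t1: "\<bar>y\<bar> \<le> \<bar>y - x0\<bar> + \<bar>x0\<bar>" using abs_triangle_ineq[of "y - x0" x0] by simp
  have t2: "\<bar>x0\<bar> \<le> \<bar>y - x0\<bar> + \<bar>y\<bar>" using abs_triangle_ineq[of "x0 - y" y] by (simp add: abs_minus_commute)
  have ax0: "\<bar>x0\<bar> > 0" using x0 by simp
  have yb: "\<bar>y\<bar> \<le> 2 * \<bar>x0\<bar>" using t1 y ax0 by linarith
  have yl: "\<bar>y\<bar> > 0" using t2 y ax0 by linarith
  have "a*y+b \<noteq> 0"
  proof (cases "b = 0")
    case True thus ?thesis using ab yl by auto
  next
    case False
    have "\<bar>x0\<bar> * (2*\<bar>a\<bar>+1) < \<bar>b\<bar>" using sb[OF False] by (simp add: pos_less_divide_eq add_pos_nonneg)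
    hence f1: "\<bar>x0\<bar> + 2*(\<bar>a\<bar>*\<bar>x0\<bar>) < \<bar>b\<bar>" by (simp add: algebra_simps)
    have "\<bar>a\<bar> * \<bar>y\<bar> \<le> \<bar>a\<bar> * (2 * \<bar>x0\<bar>)" using yb by (intro mult_left_mono) auto
    hence f2: "\<bar>a\<bar> * \<bar>y\<bar> \<le> 2*(\<bar>a\<bar>*\<bar>x0\<bar>)" by (simp add: algebra_simps)
    have "\<bar>a\<bar> * \<bar>y\<bar> < \<bar>b\<bar>" using f1 f2 abs_ge_zero[of x0] by linarith
    hence "\<bar>a * y\<bar> < \<bar>b\<bar>" by (simp add: abs_mult)
    thus ?thesis by auto
  qed
  thus ?thesis using yl by simp
qed

lemma W_bound:
  fixes a b x0 y :: real
  assumes x1: "\<bar>x0\<bar> \<le> 1" and y: "\<bar>y - x0\<bar> \<le> \<bar>x0\<bar> / 2"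
  shows "\<bar>y^2 * (a*y+b)\<bar> \<le> 3 * x0^2 * (2*\<bar>a\<bar>+\<bar>b\<bar>+1)"
proof -
  have t1: "\<bar>y\<bar> \<le> \<bar>y - x0\<bar> + \<bar>x0\<bar>" using abs_triangle_ineq[of "y - x0" x0] by simp
  have yb: "\<bar>y\<bar> \<le> 3/2 * \<bar>x0\<bar>" using t1 y by linarith
  have y2: "y^2 \<le> 9/4 * x0^2"
  proof -
    have "\<bar>y\<bar> * \<bar>y\<bar> \<le> (3/2 * \<bar>x0\<bar>) * (3/2 * \<bar>x0\<bar>)" using yb by (intro mult_mono) auto
    thus ?thesis by (simp add: power2_eq_square abs_mult[symmetric])
  qed
  have l: "\<bar>a*y+b\<bar> \<le> 2*\<bar>a\<bar>+\<bar>b\<bar>+1"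
  proof -
    have "\<bar>a*y\<bar> \<le> \<bar>a\<bar> * (3/2)" unfolding abs_mult using yb x1 by (intro mult_left_mono) auto
    hence "\<bar>a*y\<bar> \<le> 2*\<bar>a\<bar>" by simp
    thus ?thesis using abs_triangle_ineq[of "a*y" b] by simp
  qed
  have "\<bar>y^2 * (a*y+b)\<bar> = y^2 * \<bar>a*y+b\<bar>" by (simp add: abs_mult)
  also have "\<dots> \<le> (9/4 * x0^2) * (2*\<bar>a\<bar>+\<bar>b\<bar>+1)" using y2 l by (intro mult_mono) auto
  also have "\<dots> \<le> 3 * x0^2 * (2*\<bar>a\<bar>+\<bar>b\<bar>+1)" by (intro mult_right_mono) auto
  finally show ?thesis .
qed

lemma R_bound:
  fixes R K x0 :: real
  assumes "R > 0" "K > 0" "\<bar>x0\<bar> \<le> 1 / (6*R*K)"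
  shows "R * (3 * x0^2 * K) \<le> \<bar>x0\<bar> / 2"
proof -
  have "\<bar>x0\<bar> * (6*R*K) \<le> 1" using assms by (simp add: pos_le_divide_eq)
  hence "\<bar>x0\<bar> * (\<bar>x0\<bar> * (6*R*K)) \<le> \<bar>x0\<bar> * 1" by (intro mult_left_mono) auto
  thus ?thesis by (simp add: power2_eq_square abs_mult[symmetric] algebra_simps)
qed

lemma center_C0:
  fixes A B \<phi> :: "real \<Rightarrow> real" and a b :: real
  assumes \<phi>c: "continuous_on {0..1} \<phi>"
    and A: "\<And>t. A t = a * \<phi> t" and B: "\<And>t. B t = b * \<phi> t"
    and ab: "a \<noteq> 0 \<or> b \<noteq> 0"
    and i0: "(\<phi> has_integral 0) {0..1}"
  shows "has_center (abel_field A B)"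
proof -
  define W where "W y = y^2 * (a*y+b)" for y :: real
  have fW: "abel_field A B t y = \<phi> t * W y" for t y
    unfolding abel_field_def W_def A B by (simp add: algebra_simps power2_eq_square power3_eq_cube)
  have Wc: "continuous_on UNIV W" unfolding W_def by (intro continuous_intros)
  define \<Phi> where "\<Phi> t = integral {0..t} \<phi>" for t
  have d\<Phi>: "(\<Phi> has_real_derivative \<phi> t) (at t within {0..1})" if "t \<in> {0..1}" for t
    unfolding \<Phi>_def by (rule integral_has_real_derivative[OF \<phi>c that])
  have \<Phi>0: "\<Phi> 0 = 0" unfolding \<Phi>_def by simp
  have \<Phi>1: "\<Phi> 1 = 0" unfolding \<Phi>_def using integral_unique[OF i0] by simp
  have \<Phi>c: "continuous_on {0..1} \<Phi>"
    using d\<Phi> by (meson DERIV_continuous continuous_on_eq_continuous_within)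
  obtain R0 where R0: "\<forall>t\<in>{0..1}. \<bar>\<Phi> t\<bar> \<le> R0" using cont_bound[OF \<Phi>c] by blast
  define R where "R = \<bar>R0\<bar> + 1"
  have Rpos: "R > 0" unfolding R_def by simp
  have \<Phi>R: "\<bar>\<Phi> t\<bar> < R" if "t \<in> {0..1}" for t using R0 that unfolding R_def by force
  define K where "K = 2*\<bar>a\<bar>+\<bar>b\<bar>+1"
  have Kpos: "K > 0" unfolding K_def by simp
  define e where "e = min 1 (min (1/(6*R*K)) (if b = 0 then 1 else \<bar>b\<bar>/(2*\<bar>a\<bar>+1)))"
  have epos: "e > 0" unfolding e_def using Rpos Kpos by auto
  have "\<forall>x0. \<bar>x0\<bar> < e \<longrightarrow> periodic_orbit (abel_field A B) x0"
  proof (intro allI impI)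
    fix x0 :: real assume xe: "\<bar>x0\<bar> < e"
    show "periodic_orbit (abel_field A B) x0"
    proof (cases "x0 = 0")
      case True
      have "is_solution (abel_field A B) (\<lambda>t. 0)" by (rule const_sol) (simp add: abel_field_def)
      thus ?thesis unfolding periodic_orbit_def using True by blast
    next
      case False
      have x1: "\<bar>x0\<bar> \<le> 1" using xe unfolding e_def by simp
      have xR: "\<bar>x0\<bar> \<le> 1/(6*R*K)" using xe unfolding e_def by simp
      have xb: "b \<noteq> 0 \<Longrightarrow> \<bar>x0\<bar> < \<bar>b\<bar>/(2*\<bar>a\<bar>+1)" using xe unfolding e_def by simp
      have ax: "\<bar>x0\<bar> > 0" using False by simp
      define lo' where "lo' = x0 - 3/4 * \<bar>x0\<bar>"
      define lo where "lo = x0 - \<bar>x0\<bar>/2"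
      define hi where "hi = x0 + \<bar>x0\<bar>/2"
      define hi' where "hi' = x0 + 3/4 * \<bar>x0\<bar>"
      have ord: "lo' < lo" "lo < x0" "x0 < hi" "hi < hi'" unfolding lo'_def lo_def hi_def hi'_def using ax by auto
      have nz: "\<forall>y\<in>{lo'..hi'}. W y \<noteq> 0"
      proof
        fix y assume "y \<in> {lo'..hi'}"
        hence "lo' \<le> y" "y \<le> hi'" by auto
        hence "\<bar>y - x0\<bar> \<le> 3/4 * \<bar>x0\<bar>" unfolding lo'_def hi'_def by (intro abs_leI) linarith+
        thus "W y \<noteq> 0" unfolding W_def using W_nz[of x0 a b y] False ab xb by blast
      qed
      have Wb: "\<forall>y\<in>{lo..hi}. \<bar>W y\<bar> \<le> 3 * x0^2 * K"
      proof
        fix y assume "y \<in> {lo..hi}"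
        hence "lo \<le> y" "y \<le> hi" by auto
        hence "\<bar>y - x0\<bar> \<le> \<bar>x0\<bar>/2" unfolding lo_def hi_def by (intro abs_leI) linarith+
        thus "\<bar>W y\<bar> \<le> 3 * x0^2 * K" unfolding W_def K_def by (rule W_bound[OF x1])
      qed
      have rb: "R * (3 * x0^2 * K) \<le> \<bar>x0\<bar> / 2" by (rule R_bound[OF Rpos Kpos xR])
      have r1: "R * (3 * x0^2 * K) \<le> x0 - lo" using rb unfolding lo_def by simp
      have r2: "R * (3 * x0^2 * K) \<le> hi - x0" using rb unfolding hi_def by simp
      obtain Y where Y0: "Y 0 = x0" and dY: "\<And>\<tau>. \<bar>\<tau>\<bar> < R \<Longrightarrow> (Y has_real_derivative W (Y \<tau>)) (at \<tau>)"
        using auto_exist[OF Wc ord nz Wb r1 r2 Rpos] by blast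
      define x where "x t = Y (\<Phi> t)" for t
      have "is_solution (abel_field A B) x" unfolding is_solution_def
      proof
        fix t :: real assume t: "t \<in> {0..1}"
        from DERIV_chain2[OF dY[OF \<Phi>R[OF t]] d\<Phi>[OF t]]
        show "(x has_real_derivative abel_field A B t (x t)) (at t within {0..1})"
          unfolding x_def fW by (simp add: mult.commute)
      qed
      moreover have "x 0 = x0" "x 1 = x0" unfolding x_def using \<Phi>0 \<Phi>1 Y0 by auto
      ultimately show ?thesis unfolding periodic_orbit_def by blast
    qed
  qed
  thus ?thesis unfolding has_center_def using epos by blast
qed

lemma moeb:
  fixes A B a1 b1 x1 x2 C :: real
  assumes w1: "a1*x1+b1 \<noteq> 0" and w2: "a1*x2+b1 \<noteq> 0" and C: "C = A*b1 - a1*B"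
  shows "(A*x2+B)/(a1*x2+b1) - (A*x1+B)/(a1*x1+b1) = C*(x2-x1)/((a1*x1+b1)*(a1*x2+b1))"
  using w1 w2 unfolding C by (simp add: field_simps)

lemma main_C0:
  fixes A B \<phi> :: "real \<Rightarrow> real" and a b :: real
  assumes \<phi>c: "continuous_on {0..1} \<phi>"
    and A: "\<And>t. A t = a * \<phi> t" and B: "\<And>t. B t = b * \<phi> t"
    and ab: "a \<noteq> 0 \<or> b \<noteq> 0"
    and nc: "\<not> has_center (abel_field A B)"
  shows "(\<forall>p q. p \<noteq> 0 \<and> q \<noteq> 0 \<and> periodic_orbit (abel_field A B) p \<and> periodic_orbit (abel_field A B) q \<longrightarrow> p = q)
       \<and> (\<forall>p. p \<noteq> 0 \<and> periodic_orbit (abel_field A B) p \<longrightarrow> hyperbolic_orbit (abel_field A B) p)"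
proof -
  have Ac: "continuous_on {0..1} A" unfolding A by (intro continuous_intros \<phi>c)
  have Bc: "continuous_on {0..1} B" unfolding B by (intro continuous_intros \<phi>c)
  define I\<phi> where "I\<phi> = integral {0..1} \<phi>"
  have \<phi>i: "(\<phi> has_integral I\<phi>) {0..1}" unfolding I\<phi>_def
    by (rule integrable_integral[OF integrable_continuous_real[OF \<phi>c]])
  have Inz: "I\<phi> \<noteq> 0"
  proof
    assume "I\<phi> = 0"
    hence "has_center (abel_field A B)" using center_C0[OF \<phi>c A B ab] \<phi>i by simp
    thus False using nc by simp
  qed
  have orb: "a \<noteq> 0 \<and> b \<noteq> 0 \<and> p = - b / a" if p: "p \<noteq> 0" "periodic_orbit (abel_field A B) p" for p
  proof -
    obtain x where xs: "is_solution (abel_field A B) x" and x0: "x 0 = p" and x1: "x 1 = p"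
      using p(2) unfolding periodic_orbit_def by blast
    have "\<exists>t0\<in>{0..1}. a * x t0 + b = 0"
    proof (rule ccontr)
      assume "\<not> ?thesis"
      hence wnz: "\<forall>t\<in>{0..1}. a * x t + b \<noteq> 0" by auto
      have "((\<lambda>t. (A t * x t + B t) / (a * x t + b)) has_integral 0) {0..1}"
        by (rule G_integral[OF Ac Bc xs _ _ ab wnz]) (use x0 x1 p in auto)
      hence "(\<phi> has_integral 0) {0..1}"
        by (rule hi_cong) (use wnz in \<open>auto simp: A B field_simps\<close>)
      hence "I\<phi> = 0" using has_integral_unique[OF \<phi>i] by blast
      thus False using Inz by simp
    qed
    then obtain t0 where t0: "t0 \<in> {0..1}" "a * x t0 + b = 0" by blast
    have a: "a \<noteq> 0" using t0 ab by auto
    define c where "c = - b / a"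
    have xc: "x t0 = c" using t0(2) a unfolding c_def by (simp add: field_simps)
    have cs: "is_solution (abel_field A B) (\<lambda>t. c)"
      by (rule const_sol) (use a in \<open>simp add: abel_field_def A B c_def field_simps power2_eq_square power3_eq_cube\<close>)
    have "x 0 = c" using sol_unique_at[OF Ac Bc xs cs xc t0(1)] by simp
    hence "p = c" using x0 by simp
    moreover have "b \<noteq> 0" using \<open>p = c\<close> p(1) unfolding c_def by auto
    ultimately show ?thesis using a unfolding c_def by simp
  qed
  have part1: "\<forall>p q. p \<noteq> 0 \<and> q \<noteq> 0 \<and> periodic_orbit (abel_field A B) p \<and> periodic_orbit (abel_field A B) q \<longrightarrow> p = q"
    using orb by metis
  have part2: "hyperbolic_orbit (abel_field A B) p" if p: "p \<noteq> 0" "periodic_orbit (abel_field A B) p" for p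
  proof -
    have ab': "a \<noteq> 0" "b \<noteq> 0" "p = - b / a" using orb[OF p] by auto
    have e: "a*p+b = 0" using ab' by (simp add: field_simps)
    have "abel_field A B t p = \<phi> t * p^2 * (a*p+b)" for t
      by (simp add: abel_field_def A B algebra_simps power2_eq_square power3_eq_cube)
    hence "abel_field A B t p = 0" for t using e by simp
    hence cs: "is_solution (abel_field A B) (\<lambda>t. p)" by (intro const_sol)
    have der: "(poincare (abel_field A B) has_real_derivative
           exp (integral {0..1} (\<lambda>t. 3 * A t * p^2 + 2 * B t * p)))
         (at p within poincare_domain (abel_field A B))"
      using poincare_deriv[OF Ac Bc cs] by simp
    define \<kappa> where "\<kappa> = 3 * a * p^2 + 2 * b * p"
    have ap: "a * p = - b" using e by simp
    have "3 * a * p^2 = 3 * p * (a * p)" by (simp add: power2_eq_square algebra_simps)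
    hence \<kappa>: "\<kappa> = - b * p" unfolding \<kappa>_def using ap by (simp add: algebra_simps)
    have \<kappa>nz: "\<kappa> \<noteq> 0" using \<kappa> ab' p by simp
    have "((\<lambda>t. \<kappa> * \<phi> t) has_integral \<kappa> * I\<phi>) {0..1}" by (rule has_integral_mult_right[OF \<phi>i])
    hence "((\<lambda>t. 3 * A t * p^2 + 2 * B t * p) has_integral \<kappa> * I\<phi>) {0..1}"
      by (rule hi_cong) (simp add: A B \<kappa>_def algebra_simps)
    hence "integral {0..1} (\<lambda>t. 3 * A t * p^2 + 2 * B t * p) = \<kappa> * I\<phi>" by (rule integral_unique)
    hence "exp (integral {0..1} (\<lambda>t. 3 * A t * p^2 + 2 * B t * p)) \<noteq> 1" using \<kappa>nz Inz by simp
    thus ?thesis unfolding hyperbolic_orbit_def using der by blast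
  qed
  show ?thesis using part1 part2 by blast
qed

lemma hyp_id:
  fixes A B a1 b1 x C :: real
  assumes w: "a1*x+b1 \<noteq> 0" and C: "C = A*b1 - a1*B"
  shows "2*(A*x^2 + B*x) + a1*x^2*(A*x+B)/(a1*x+b1) + C*(x^2/(a1*x+b1)) = 3*A*x^2 + 2*B*x"
proof -
  have num: "a1*x^2*(A*x+B) + C*x^2 = A*x^2*(a1*x+b1)" unfolding C by (simp add: algebra_simps power2_eq_square)
  have "a1*x^2*(A*x+B)/(a1*x+b1) + C*(x^2/(a1*x+b1)) = (a1*x^2*(A*x+B) + C*x^2)/(a1*x+b1)"
    by (simp add: add_divide_distrib)
  also have "\<dots> = A*x^2" unfolding num using w by simp
  finally show ?thesis by (simp add: algebra_simps)
qed

lemma main_Cnz: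
  fixes A B g :: "real \<Rightarrow> real" and a0 a1 b0 b1 C :: real
  assumes gc: "continuous_on {0..1} g"
    and A: "\<And>t. A t = a0 + a1 * g t" and B: "\<And>t. B t = b0 + b1 * g t"
    and C: "C = a0 * b1 - a1 * b0" and Cnz: "C \<noteq> 0"
  shows "(\<forall>p q. p \<noteq> 0 \<and> q \<noteq> 0 \<and> periodic_orbit (abel_field A B) p \<and> periodic_orbit (abel_field A B) q \<longrightarrow> p = q)
       \<and> (\<forall>p. p \<noteq> 0 \<and> periodic_orbit (abel_field A B) p \<longrightarrow> hyperbolic_orbit (abel_field A B) p)"
proof -
  have Ac: "continuous_on {0..1} A" unfolding A by (intro continuous_intros gc)
  have Bc: "continuous_on {0..1} B" unfolding B by (intro continuous_intros gc)
  have Cid: "C = A t * b1 - a1 * B t" for t unfolding A B C by (simp add: algebra_simps)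
  have ab: "a1 \<noteq> 0 \<or> b1 \<noteq> 0" using Cnz C by auto
  have wnz: "\<forall>t\<in>{0..1}. a1 * x t + b1 \<noteq> 0"
    if xs: "is_solution (abel_field A B) x" and x1: "x 1 = x 0" and x0: "x 0 \<noteq> 0" for x
  proof -
    have xnz: "x t \<noteq> 0" if "t \<in> {0..1}" for t by (rule sol_nonzero[OF Ac Bc xs x0 that])
    have "\<forall>t\<in>{0..1}. - C * (a1 * x t + b1) \<noteq> 0"
    proof (rule no_zero_periodic[where D="\<lambda>t. - C * (a1 * abel_field A B t (x t))"])
      fix t :: real assume t: "t \<in> {0..1}"
      have "(x has_real_derivative abel_field A B t (x t)) (at t within {0..1})"
        using xs t unfolding is_solution_def by auto
      from DERIV_cmult[OF DERIV_add[OF DERIV_cmult[OF this, of a1] DERIV_const[of b1]], of "- C"]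
      show "((\<lambda>t. - C * (a1 * x t + b1)) has_real_derivative - C * (a1 * abel_field A B t (x t))) (at t within {0..1})"
        by simp
    next
      show "- C * (a1 * x 1 + b1) = - C * (a1 * x 0 + b1)" using x1 by simp
    next
      fix t :: real assume t: "t \<in> {0..1}" and w0: "- C * (a1 * x t + b1) = 0"
      hence w: "a1 * x t + b1 = 0" using Cnz by simp
      have "a1 * abel_field A B t (x t) = (x t)^2 * (A t * (a1 * x t + b1) - (A t * b1 - a1 * B t))"
        unfolding abel_field_def by (simp add: algebra_simps power2_eq_square power3_eq_cube)
      also have "\<dots> = - C * (x t)^2" using w Cid[of t] by simp
      finally have "- C * (a1 * abel_field A B t (x t)) = C^2 * (x t)^2" by (simp add: power2_eq_square)
      moreover have "C^2 * (x t)^2 > 0" using Cnz xnz[OF t] by simp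
      ultimately show "- C * (a1 * abel_field A B t (x t)) > 0" by simp
    qed
    thus ?thesis using Cnz by simp
  qed
  have part2: "hyperbolic_orbit (abel_field A B) p" if p: "p \<noteq> 0" "periodic_orbit (abel_field A B) p" for p
  proof -
    obtain x where xs: "is_solution (abel_field A B) x" and x0: "x 0 = p" and x1: "x 1 = p"
      using p(2) unfolding periodic_orbit_def by blast
    have per: "x 1 = x 0" and nz: "x 0 \<noteq> 0" using x0 x1 p by auto
    have w: "\<forall>t\<in>{0..1}. a1 * x t + b1 \<noteq> 0" by (rule wnz[OF xs per nz])
    have xnz: "x t \<noteq> 0" if "t \<in> {0..1}" for t by (rule sol_nonzero[OF Ac Bc xs nz that])
    have xc: "continuous_on {0..1} x" by (rule sol_cont[OF xs])
    define j where "j t = (x t)^2 / (a1 * x t + b1)" for t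
    have jc: "continuous_on {0..1} j" unfolding j_def using w by (intro continuous_intros xc) auto
    define J where "J = integral {0..1} j"
    have ji: "(j has_integral J) {0..1}" unfolding J_def
      by (rule integrable_integral[OF integrable_continuous_real[OF jc]])
    have Jnz: "J \<noteq> 0" by (rule nonvanish_integral[OF jc _ ji]) (use w xnz in \<open>auto simp: j_def\<close>)
    have "((\<lambda>t. 2 * (A t * (x t)^2 + B t * x t) + a1 * (x t)^2 * (A t * x t + B t) / (a1 * x t + b1) + C * j t)
           has_integral 2 * 0 + 0 + C * J) {0..1}"
      by (intro has_integral_add has_integral_mult_right I1[OF Ac Bc xs per nz] Iw[OF Ac Bc xs per nz w] ji)
    hence "((\<lambda>t. 2 * (A t * (x t)^2 + B t * x t) + a1 * (x t)^2 * (A t * x t + B t) / (a1 * x t + b1) + C * j t)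
           has_integral C * J) {0..1}" by simp
    hence "((\<lambda>t. 3 * A t * (x t)^2 + 2 * B t * x t) has_integral C * J) {0..1}"
    proof (rule hi_cong)
      fix t :: real assume t: "t \<in> {0..1}"
      have wt: "a1 * x t + b1 \<noteq> 0" using w t by auto
      show "2 * (A t * (x t)^2 + B t * x t) + a1 * (x t)^2 * (A t * x t + B t) / (a1 * x t + b1) + C * j t
            = 3 * A t * (x t)^2 + 2 * B t * x t"
        unfolding j_def using hyp_id[OF wt Cid[of t]] by (simp add: algebra_simps)
    qed
    hence "integral {0..1} (\<lambda>t. 3 * A t * (x t)^2 + 2 * B t * x t) = C * J" by (rule integral_unique)
    hence "exp (integral {0..1} (\<lambda>t. 3 * A t * (x t)^2 + 2 * B t * x t)) \<noteq> 1" using Cnz Jnz by simp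
    moreover have "(poincare (abel_field A B) has_real_derivative
           exp (integral {0..1} (\<lambda>t. 3 * A t * (x t)^2 + 2 * B t * x t)))
         (at p within poincare_domain (abel_field A B))"
      using poincare_deriv[OF Ac Bc xs] x0 by simp
    ultimately show ?thesis unfolding hyperbolic_orbit_def by blast
  qed
  have part1: "p = q" if p: "p \<noteq> 0" "periodic_orbit (abel_field A B) p"
    and q: "q \<noteq> 0" "periodic_orbit (abel_field A B) q" for p q
  proof (rule ccontr)
    assume pq: "p \<noteq> q"
    obtain x1 where xs1: "is_solution (abel_field A B) x1" and x10: "x1 0 = p" and x11: "x1 1 = p"
      using p(2) unfolding periodic_orbit_def by blast
    obtain x2 where xs2: "is_solution (abel_field A B) x2" and x20: "x2 0 = q" and x21: "x2 1 = q"
      using q(2) unfolding periodic_orbit_def by blast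
    have per1: "x1 1 = x1 0" "x1 0 \<noteq> 0" using x10 x11 p by auto
    have per2: "x2 1 = x2 0" "x2 0 \<noteq> 0" using x20 x21 q by auto
    have w1: "\<forall>t\<in>{0..1}. a1 * x1 t + b1 \<noteq> 0" by (rule wnz[OF xs1 per1])
    have w2: "\<forall>t\<in>{0..1}. a1 * x2 t + b1 \<noteq> 0" by (rule wnz[OF xs2 per2])
    have G1: "((\<lambda>t. (A t * x1 t + B t) / (a1 * x1 t + b1)) has_integral 0) {0..1}"
      by (rule G_integral[OF Ac Bc xs1 per1 ab w1])
    have G2: "((\<lambda>t. (A t * x2 t + B t) / (a1 * x2 t + b1)) has_integral 0) {0..1}"
      by (rule G_integral[OF Ac Bc xs2 per2 ab w2])
    define h where "h t = (A t * x2 t + B t) / (a1 * x2 t + b1) - (A t * x1 t + B t) / (a1 * x1 t + b1)" for t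
    have hi: "(h has_integral 0) {0..1}" using has_integral_diff[OF G2 G1] unfolding h_def by simp
    have hc: "continuous_on {0..1} h" unfolding h_def using w1 w2
      by (intro continuous_intros Ac Bc sol_cont[OF xs1] sol_cont[OF xs2]) auto
    have "\<forall>t\<in>{0..1}. h t \<noteq> 0"
    proof
      fix t :: real assume t: "t \<in> {0..1}"
      have d: "x1 t \<noteq> x2 t" by (rule sol_distinct[OF Ac Bc xs1 xs2 _ t]) (use x10 x20 pq in auto)
      have wt1: "a1 * x1 t + b1 \<noteq> 0" and wt2: "a1 * x2 t + b1 \<noteq> 0" using w1 w2 t by auto
      have "h t = C * (x2 t - x1 t) / ((a1 * x1 t + b1) * (a1 * x2 t + b1))"
        unfolding h_def by (rule moeb[OF wt1 wt2 Cid])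
      thus "h t \<noteq> 0" using Cnz d wt1 wt2 by simp
    qed
    from nonvanish_integral[OF hc this hi] show False by simp
  qed
  show ?thesis using part1 part2 by blast
qed

lemma main_generic:
  fixes A B g :: "real \<Rightarrow> real" and a0 a1 b0 b1 :: real
  assumes gc: "continuous_on {0..1} g"
    and A: "\<And>t. A t = a0 + a1 * g t" and B: "\<And>t. B t = b0 + b1 * g t"
    and nc: "\<not> has_center (abel_field A B)"
  shows "(\<forall>p q. p \<noteq> 0 \<and> q \<noteq> 0 \<and> periodic_orbit (abel_field A B) p \<and> periodic_orbit (abel_field A B) q \<longrightarrow> p = q)
       \<and> (\<forall>p. p \<noteq> 0 \<and> periodic_orbit (abel_field A B) p \<longrightarrow> hyperbolic_orbit (abel_field A B) p)"
proof (cases "a0 * b1 - a1 * b0 = 0")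
  case False
  show ?thesis by (rule main_Cnz[OF gc A B refl False])
next
  case True
  show ?thesis
  proof (cases "a0 = 0 \<and> a1 = 0")
    case True
    define \<phi> where "\<phi> t = b0 + b1 * g t" for t
    have \<phi>c: "continuous_on {0..1} \<phi>" unfolding \<phi>_def by (intro continuous_intros gc)
    show ?thesis
      by (rule main_C0[OF \<phi>c _ _ _ nc, of 0 1]) (use True in \<open>auto simp: A B \<phi>_def\<close>)
  next
    case False
    define \<mu> where "\<mu> = (if a0 \<noteq> 0 then b0 / a0 else b1 / a1)"
    have C0: "b1 * a0 = b0 * a1" using \<open>a0 * b1 - a1 * b0 = 0\<close> by (simp add: algebra_simps)
    have m0: "b0 = \<mu> * a0"
    proof (cases "a0 = 0")
      case True
      hence "a1 \<noteq> 0" using False by auto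
      thus ?thesis using C0 True by simp
    next
      case False
      thus ?thesis unfolding \<mu>_def by simp
    qed
    have m1: "b1 = \<mu> * a1"
    proof (cases "a0 = 0")
      case True
      hence "a1 \<noteq> 0" using False by auto
      thus ?thesis using True unfolding \<mu>_def by simp
    next
      case False
      thus ?thesis using C0 unfolding \<mu>_def by (simp add: field_simps)
    qed
    define \<phi> where "\<phi> t = a0 + a1 * g t" for t
    have \<phi>c: "continuous_on {0..1} \<phi>" unfolding \<phi>_def by (intro continuous_intros gc)
    show ?thesis
      by (rule main_C0[OF \<phi>c _ _ _ nc, of 1 \<mu>]) (auto simp: A B \<phi>_def m0 m1 algebra_simps)
  qed
qed

theorem corollary1p1:
  fixes j k :: nat and a0 a1 a2 b0 b1 b2 :: real
  assumes "0 < j" "j < k"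
    and "a1 + a2 = 0" "b1 + b2 = 0"
    and "\<not> has_center (abel_field (\<lambda>t. a0 + a1 * t ^ j + a2 * t ^ k)
                                  (\<lambda>t. b0 + b1 * t ^ j + b2 * t ^ k))"
  shows "(\<forall>p q. p \<noteq> 0 \<and> q \<noteq> 0
             \<and> periodic_orbit (abel_field (\<lambda>t. a0 + a1 * t ^ j + a2 * t ^ k)
                                          (\<lambda>t. b0 + b1 * t ^ j + b2 * t ^ k)) p
             \<and> periodic_orbit (abel_field (\<lambda>t. a0 + a1 * t ^ j + a2 * t ^ k)
                                          (\<lambda>t. b0 + b1 * t ^ j + b2 * t ^ k)) q
             \<longrightarrow> p = q)
       \<and> (\<forall>p. p \<noteq> 0
             \<and> periodic_orbit (abel_field (\<lambda>t. a0 + a1 * t ^ j + a2 * t ^ k)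
                                          (\<lambda>t. b0 + b1 * t ^ j + b2 * t ^ k)) p
             \<longrightarrow> hyperbolic_orbit (abel_field (\<lambda>t. a0 + a1 * t ^ j + a2 * t ^ k)
                                          (\<lambda>t. b0 + b1 * t ^ j + b2 * t ^ k)) p)"
proof (rule main_generic[of "\<lambda>t. t ^ j - t ^ k"])
  show "continuous_on {0..1} (\<lambda>t::real. t ^ j - t ^ k)" by (intro continuous_intros)
  have a2: "a2 = - a1" and b2: "b2 = - b1" using assms(3,4) by linarith+
  show "\<And>t. a0 + a1 * t ^ j + a2 * t ^ k = a0 + a1 * (t ^ j - t ^ k)" using a2 by (simp add: algebra_simps)
  show "\<And>t. b0 + b1 * t ^ j + b2 * t ^ k = b0 + b1 * (t ^ j - t ^ k)" using b2 by (simp add: algebra_simps)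
  show "\<not> has_center (abel_field (\<lambda>t. a0 + a1 * t ^ j + a2 * t ^ k) (\<lambda>t. b0 + b1 * t ^ j + b2 * t ^ k))"
    by (rule assms(5))
qed

end
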